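(* Let $n$ be a composite positive integer and let $\pi\in S(\mathbb{Z}_n)$ be a permutation induced by a polynomial with coefficients in $\mathbb{Z}_n$ (i.e. there is $f\in\mathbb{Z}_n[x]$ with $\pi(x)=f(x)$ for all $x\in\mathbb{Z}_n$). Then $t([\pi])\leq n-3$.
   Context: $S(\mathbb{Z}_n)$ is the set of bijections $\mathbb{Z}_n\to\mathbb{Z}_n$. For $\pi\in S(\mathbb{Z}_n)$, $\mathrm{cyc}(\pi)$ is the number of cycles (including fixed points) of $\pi$, $t(\pi)=n-\mathrm{cyc}(\pi)$, $[\pi]=\{x\mapsto \pi(x+b): b\in\mathbb{Z}_n\}$ and $t([\pi])=\min_{\sigma\in[\pi]}t(\sigma)$. *)

theory Defs
  imports "HOL-Computational_Algebra.Polynomial" "HOL-Computational_Algebra.Primes"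
begin

text \<open>Z_n is modelled as the set {..<n} of natural numbers with arithmetic mod n.
  A permutation of Z_n is a function nat => nat that is a bijection of {..<n}.\<close>

definition perm_Zn :: "nat \<Rightarrow> (nat \<Rightarrow> nat) \<Rightarrow> bool" where
  "perm_Zn n \<pi> \<longleftrightarrow> bij_betw \<pi> {..<n} {..<n}"

definition poly_induced :: "nat \<Rightarrow> (nat \<Rightarrow> nat) \<Rightarrow> bool" where
  "poly_induced n \<pi> \<longleftrightarrow> (\<exists>f :: int poly. \<forall>x<n. int (\<pi> x) = poly f (int x) mod int n)"

definition cycle_of :: "(nat \<Rightarrow> nat) \<Rightarrow> nat \<Rightarrow> nat set" where
  "cycle_of \<pi> x = {(\<pi> ^^ k) x | k. True}"

definition cyc :: "nat \<Rightarrow> (nat \<Rightarrow> nat) \<Rightarrow> nat" where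
  "cyc n \<pi> = card (cycle_of \<pi> ` {..<n})"

definition tnum :: "nat \<Rightarrow> (nat \<Rightarrow> nat) \<Rightarrow> nat" where
  "tnum n \<pi> = n - cyc n \<pi>"

definition shift_perm :: "nat \<Rightarrow> (nat \<Rightarrow> nat) \<Rightarrow> nat \<Rightarrow> (nat \<Rightarrow> nat)" where
  "shift_perm n \<pi> b = (\<lambda>x. \<pi> ((x + b) mod n))"

definition perm_class :: "nat \<Rightarrow> (nat \<Rightarrow> nat) \<Rightarrow> (nat \<Rightarrow> nat) set" where
  "perm_class n \<pi> = shift_perm n \<pi> ` {..<n}"

definition tclass :: "nat \<Rightarrow> (nat \<Rightarrow> nat) \<Rightarrow> nat" where
  "tclass n \<pi> = Min (tnum n ` perm_class n \<pi>)"

end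

theory Submission
  imports Defs "HOL-Number_Theory.Cong"
begin

lemma poly_mod_cong:
  fixes f :: "int poly" and m a b :: int
  assumes "a mod m = b mod m"
  shows "poly f a mod m = poly f b mod m"
proof (induction f)
  case 0 then show ?case by simp
next
  case (pCons c p)
  have "(a * poly p a) mod m = (b * poly p b) mod m"
    using mod_mult_cong[OF assms pCons.IH] .
  then have "(c + a * poly p a) mod m = (c + b * poly p b) mod m"
    by (rule mod_add_cong[OF refl])
  then show ?case by simp
qed

lemma orbit_inv:
  assumes "\<And>x. x \<in> S \<Longrightarrow> g x \<in> S" "x \<in> S"
  shows "(g ^^ k) x \<in> S"
  using assms by (induction k) auto

theorem proposition1p6:
  fixes n :: nat and \<pi> :: "nat \<Rightarrow> nat"
  assumes "n > 1" and "\<not> prime n"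
    and "perm_Zn n \<pi>" and "poly_induced n \<pi>"
  shows "tclass n \<pi> \<le> n - 3"
proof -
  obtain f :: "int poly" where hf: "\<And>x. x < n \<Longrightarrow> int (\<pi> x) = poly f (int x) mod int n"
    using assms(4) unfolding poly_induced_def by blast
  have bij: "bij_betw \<pi> {..<n} {..<n}" using assms(3) unfolding perm_Zn_def .
  obtain p where pp: "prime p" "p dvd n" "p \<noteq> n"
  proof -
    obtain p where "prime p" "p dvd n" using prime_factor_nat[of n] assms(1) by auto
    then show ?thesis using that assms(2) by auto
  qed
  have p1: "p > 1" using pp(1) prime_gt_1_nat by blast
  have "p \<le> n" using pp(2) assms(1) by (intro dvd_imp_le) simp_all
  then have pn: "p < n" using pp(3) by linarith
  have "0 \<in> {..<n}" using assms(1) by simp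
  then obtain b where b: "b < n" "\<pi> b = 0"
  proof -
    have "\<pi> ` {..<n} = {..<n}" using bij by (rule bij_betw_imp_surj_on)
    then have "0 \<in> \<pi> ` {..<n}" using \<open>0 \<in> {..<n}\<close> by (rule ssubst)
    then obtain c where c: "0 = \<pi> c" "c \<in> {..<n}" by (rule imageE)
    show ?thesis by (rule that[of c]) (use c in simp_all)
  qed
  define \<sigma> where "\<sigma> = shift_perm n \<pi> b"
  have sig: "\<And>x. \<sigma> x = \<pi> ((x + b) mod n)" unfolding \<sigma>_def shift_perm_def by simp
  have sig_lt: "\<And>x. \<sigma> x < n"
  proof -
    fix x
    have "(x + b) mod n \<in> {..<n}" using assms(1) by simp
    then have "\<pi> ((x + b) mod n) \<in> {..<n}" by (rule bij_betw_apply[OF bij])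
    then show "\<sigma> x < n" by (simp add: sig)
  qed
  have sig_inj: "inj_on \<sigma> {..<n}"
  proof (rule inj_onI)
    fix x y assume xy: "x \<in> {..<n}" "y \<in> {..<n}" "\<sigma> x = \<sigma> y"
    have "(x + b) mod n = (y + b) mod n"
    proof (rule inj_onD)
      show "inj_on \<pi> {..<n}" using bij by (rule bij_betw_imp_inj_on)
      show "\<pi> ((x + b) mod n) = \<pi> ((y + b) mod n)" using xy(3) by (simp add: sig)
      show "(x + b) mod n \<in> {..<n}" "(y + b) mod n \<in> {..<n}" using assms(1) by auto
    qed
    then have "(x + b) mod n = (y + b) mod n" .
    then have "x mod n = y mod n"
      using cong_add_rcancel_nat[where x=x and a=b and y=y and n=n] unfolding cong_def by simp
    then show "x = y" using xy(1,2) by simp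
  qed
  have sig0: "\<sigma> 0 = 0" using sig b by simp
  define A where "A = {x. x < n \<and> p dvd x}"
  define B where "B = {x. x < n \<and> \<not> p dvd x}"
  have piv: "\<And>y. y < n \<Longrightarrow> int (\<pi> y) mod int p = poly f (int y) mod int p"
  proof -
    fix y assume "y < n"
    have "int p dvd int n" using pp(2) by simp
    then show "int (\<pi> y) mod int p = poly f (int y) mod int p"
      using hf[OF \<open>y < n\<close>] by (simp add: mod_mod_cancel)
  qed
  have A_inv: "\<And>x. x \<in> A \<Longrightarrow> \<sigma> x \<in> A"
  proof -
    fix x assume "x \<in> A"
    then have x: "x < n" "p dvd x" unfolding A_def by auto
    have n1: "((x + b) mod n) mod p = (x + b) mod p" using pp(2) by (rule mod_mod_cancel)
    have n2: "(x + b) mod p = b mod p" using x(2) by (auto elim!: dvdE)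
    have "int ((x + b) mod n) mod int p = int b mod int p"
      using n1 n2 by (metis zmod_int)
    then have "poly f (int ((x + b) mod n)) mod int p = poly f (int b) mod int p"
      by (rule poly_mod_cong)
    then have "int (\<sigma> x) mod int p = int (\<pi> b) mod int p"
      using piv[of "(x+b) mod n"] piv[OF b(1)] assms(1) sig by simp
    then have "int (\<sigma> x mod p) = 0" using b(2) by (simp add: zmod_int)
    then have "p dvd \<sigma> x" by (simp add: dvd_eq_mod_eq_0)
    then show "\<sigma> x \<in> A" using sig_lt unfolding A_def by auto
  qed
  have B_inv: "\<And>x. x \<in> B \<Longrightarrow> \<sigma> x \<in> B"
  proof (rule ccontr)
    fix x assume xB: "x \<in> B" and nB: "\<sigma> x \<notin> B"
    then have sA: "\<sigma> x \<in> A" using sig_lt unfolding A_def B_def by auto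
    have AS: "A \<subseteq> {..<n}" unfolding A_def by auto
    have "inj_on \<sigma> A" using sig_inj inj_on_subset AS by blast
    moreover have "\<sigma> ` A \<subseteq> A" using A_inv by blast
    moreover have "finite A" by (rule finite_subset[OF AS]) simp
    ultimately have eqA: "\<sigma> ` A = A" using endo_inj_surj by blast
    have "\<sigma> x \<in> \<sigma> ` A" using sA by (subst eqA)
    then obtain a where a0: "\<sigma> x = \<sigma> a" "a \<in> A" by (rule imageE)
    then have a: "a \<in> A" "\<sigma> a = \<sigma> x" by simp_all
    have xn: "x \<in> {..<n}" using xB unfolding B_def by simp
    have "a = x" by (rule inj_onD[OF sig_inj a(2)]) (use a(1) AS xn in auto)
    then show False using a(1) xB unfolding A_def B_def by simp
  qed
  have c0: "cycle_of \<sigma> 0 = {0}"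
  proof -
    have z: "(\<sigma> ^^ k) 0 = 0" for k by (induction k) (simp_all add: sig0)
    show ?thesis unfolding cycle_of_def z by simp
  qed
  have cp: "cycle_of \<sigma> p \<subseteq> A" "p \<in> cycle_of \<sigma> p"
  proof -
    show "cycle_of \<sigma> p \<subseteq> A"
    proof
      fix y assume "y \<in> cycle_of \<sigma> p"
      then obtain k where k: "y = (\<sigma> ^^ k) p" unfolding cycle_of_def by blast
      have "p \<in> A" using pn by (simp add: A_def)
      then show "y \<in> A" using orbit_inv[of A \<sigma> p k] A_inv k by blast
    qed
    show "p \<in> cycle_of \<sigma> p" unfolding cycle_of_def
      by (rule CollectI, rule exI[where x=0]) simp
  qed
  have c1: "cycle_of \<sigma> 1 \<subseteq> B" "1 \<in> cycle_of \<sigma> 1"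
  proof -
    show "cycle_of \<sigma> 1 \<subseteq> B"
    proof
      fix y assume "y \<in> cycle_of \<sigma> 1"
      then obtain k where k: "y = (\<sigma> ^^ k) 1" unfolding cycle_of_def by blast
      have "1 \<in> B" using p1 assms(1) by (simp add: B_def)
      then show "y \<in> B" using orbit_inv[of B \<sigma> 1 k] B_inv k by blast
    qed
    show "1 \<in> cycle_of \<sigma> 1" unfolding cycle_of_def
      by (rule CollectI, rule exI[where x=0]) simp
  qed
  have "0 \<notin> B" unfolding B_def by simp
  have "1 \<notin> A" using p1 unfolding A_def by auto
  have d1: "cycle_of \<sigma> p \<noteq> {0}"
  proof
    assume "cycle_of \<sigma> p = {0}"
    then have "p = 0" using cp(2) by simp
    then show False using p1 by simp
  qed
  have d2: "cycle_of \<sigma> 1 \<noteq> {0}"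
  proof
    assume "cycle_of \<sigma> 1 = {0}"
    then have "(1::nat) = 0" using c1(2) by simp
    then show False by simp
  qed
  have d3: "cycle_of \<sigma> 1 \<noteq> cycle_of \<sigma> p"
  proof
    assume "cycle_of \<sigma> 1 = cycle_of \<sigma> p"
    then have "1 \<in> A" using c1(2) cp(1) by blast
    then show False using \<open>1 \<notin> A\<close> by blast
  qed
  have m0: "{0} \<in> cycle_of \<sigma> ` {..<n}"
  proof -
    have "cycle_of \<sigma> 0 \<in> cycle_of \<sigma> ` {..<n}" using assms(1) by simp
    then show ?thesis using c0 by simp
  qed
  have m1: "cycle_of \<sigma> p \<in> cycle_of \<sigma> ` {..<n}" using pn by blast
  have m2: "cycle_of \<sigma> 1 \<in> cycle_of \<sigma> ` {..<n}" using assms(1) by blast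
  have sub: "{{0}, cycle_of \<sigma> p, cycle_of \<sigma> 1} \<subseteq> cycle_of \<sigma> ` {..<n}"
    using m0 m1 m2 by blast
  have "card {{0}, cycle_of \<sigma> p, cycle_of \<sigma> 1} = 3"
    using d1 d2 d3 by (simp add: card_insert_if)
  then have "3 \<le> cyc n \<sigma>" unfolding cyc_def
    using card_mono[OF finite_imageI[OF finite_lessThan] sub] by simp
  then have t: "tnum n \<sigma> \<le> n - 3" unfolding tnum_def by simp
  have "\<sigma> \<in> perm_class n \<pi>" unfolding perm_class_def \<sigma>_def using b by auto
  then have "tclass n \<pi> \<le> tnum n \<sigma>" unfolding tclass_def perm_class_def
    by (simp add: Min_le)
  then show ?thesis using t by simp
qed

end
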